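(* Let $f\in\mathbb{H}$ be a pure unit quaternion, $h\in L^1(\mathbb{R}^2,\mathbb{H})$, $h_{\pm}=\frac12(h\pm fhf)$, and $$\mathcal{F}_D^{f,f}\{h\}(\boldsymbol{\omega})=\int_{\mathbb{R}^2}e^{-f\frac12(x_1\omega_1+x_2\omega_2)}\,h(\mathbf{x})\,e^{-f\frac12(x_1\omega_1-x_2\omega_2)}\,d^2\mathbf{x}.$$ Writing $\mathcal{F}^{f,f}_{D\pm}\{h\}=\mathcal{F}^{f,f}_{D}\{h_{\pm}\}$, one has $$\mathcal{F}^{f,f}_{D+}\{h\}=\int_{\mathbb{R}^2}h_+(\mathbf{x})e^{f x_2\omega_2}d^2\mathbf{x}=\int_{\mathbb{R}^2}e^{-f x_2\omega_2}h_+(\mathbf{x})d^2\mathbf{x},\quad \mathcal{F}^{f,f}_{D-}\{h\}=\int_{\mathbb{R}^2}h_-(\mathbf{x})e^{-f x_1\omega_1}d^2\mathbf{x}=\int_{\mathbb{R}^2}e^{-f x_1\omega_1}h_-(\mathbf{x})d^2\mathbf{x}.$$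
   Context: $\mathbb{H}$ is the real quaternion algebra; a pure unit quaternion $f$ satisfies $f^2=-1$, and $e^{\alpha f}=\cos\alpha+f\sin\alpha$. $d^2\mathbf{x}=dx_1dx_2$. *)

theory Defs
  imports "HOL-Analysis.Analysis"
begin

text \<open>Real quaternions H, modelled as R^4 with components
  q$1 (real part), q$2, q$3, q$4 (coefficients of i, j, k).
  Addition, real scaling, norm and Lebesgue measure are those of R^4;
  the Hamilton product is defined explicitly.\<close>

type_synonym quat = "real ^ 4"

definition qmult :: "quat \<Rightarrow> quat \<Rightarrow> quat" where
  "qmult p q = (\<chi> i.
     if i = 1 then p$1 * q$1 - p$2 * q$2 - p$3 * q$3 - p$4 * q$4
     else if i = 2 then p$1 * q$2 + p$2 * q$1 + p$3 * q$4 - p$4 * q$3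
     else if i = 3 then p$1 * q$3 - p$2 * q$4 + p$3 * q$1 + p$4 * q$2
     else p$1 * q$4 + p$2 * q$3 - p$3 * q$2 + p$4 * q$1)"

definition qreal :: "real \<Rightarrow> quat" where
  "qreal r = (\<chi> i. if i = 1 then r else 0)"

definition pure_unit :: "quat \<Rightarrow> bool" where
  "pure_unit f \<longleftrightarrow> f$1 = 0 \<and> norm f = 1"

definition qexp :: "quat \<Rightarrow> real \<Rightarrow> quat" where
  "qexp f \<alpha> = qreal (cos \<alpha>) + sin \<alpha> *\<^sub>R f"

definition hplus :: "quat \<Rightarrow> (real \<times> real \<Rightarrow> quat) \<Rightarrow> real \<times> real \<Rightarrow> quat" where
  "hplus f h x = (1/2) *\<^sub>R (h x + qmult (qmult f (h x)) f)"

definition hminus :: "quat \<Rightarrow> (real \<times> real \<Rightarrow> quat) \<Rightarrow> real \<times> real \<Rightarrow> quat" where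
  "hminus f h x = (1/2) *\<^sub>R (h x - qmult (qmult f (h x)) f)"

definition FD :: "quat \<Rightarrow> (real \<times> real \<Rightarrow> quat) \<Rightarrow> real \<times> real \<Rightarrow> quat" where
  "FD f h \<omega> = (LINT x|lborel.
      qmult (qmult (qexp f (- (1/2) * (fst x * fst \<omega> + snd x * snd \<omega>))) (h x))
            (qexp f (- (1/2) * (fst x * fst \<omega> - snd x * snd \<omega>))))"

end

theory Submission imports Defs begin
lemma qm: "qmult p q $ 1 = p$1 * q$1 - p$2 * q$2 - p$3 * q$3 - p$4 * q$4"
  "qmult p q $ 2 = p$1 * q$2 + p$2 * q$1 + p$3 * q$4 - p$4 * q$3"
  "qmult p q $ 3 = p$1 * q$3 - p$2 * q$4 + p$3 * q$1 + p$4 * q$2"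
  "qmult p q $ 4 = p$1 * q$4 + p$2 * q$3 - p$3 * q$2 + p$4 * q$1"
  by (simp_all add: qmult_def)
lemma qr: "qreal c $ 1 = c" "qreal c $ 2 = 0" "qreal c $ 3 = 0" "qreal c $ 4 = 0"
  by (simp_all add: qreal_def)

lemma nf: assumes "pure_unit f" shows "f$1 = 0" "f$2^2 + f$3^2 + f$4^2 = 1"
proof -
  show "f$1 = 0" using assms unfolding pure_unit_def by blast
  have "norm f = 1" using assms unfolding pure_unit_def by blast
  hence "sqrt (\<Sum>i\<in>UNIV. (f$i)^2) = 1" unfolding norm_vec_def L2_set_def by simp
  hence "(\<Sum>i\<in>UNIV. (f$i)^2) = 1" by simp
  thus "f$2^2 + f$3^2 + f$4^2 = 1" using \<open>f$1=0\<close> unfolding sum_4 by simp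
qed

lemma ff: assumes "pure_unit f" shows "qmult f f = qreal (-1)"
proof -
  note n = nf[OF assms]
  have e: "f$2*f$2 + f$3*f$3 + f$4*f$4 = 1" using n(2) by (simp add: power2_eq_square)
  show ?thesis unfolding vec_eq_iff forall_4 qm qr
    using n(1) e by (simp add: algebra_simps)
qed

lemma qassoc: "qmult (qmult p q) r = qmult p (qmult q r)"
  unfolding vec_eq_iff forall_4 qm by (intro conjI; algebra)
lemma qadd_l: "qmult (p + q) r = qmult p r + qmult q r"
  by (simp add: vec_eq_iff forall_4 qm algebra_simps)
lemma qadd_r: "qmult r (p + q) = qmult r p + qmult r q"
  by (simp add: vec_eq_iff forall_4 qm algebra_simps)
lemma qdiff_l: "qmult (p - q) r = qmult p r - qmult q r"
  by (simp add: vec_eq_iff forall_4 qm algebra_simps)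
lemma qdiff_r: "qmult r (p - q) = qmult r p - qmult r q"
  by (simp add: vec_eq_iff forall_4 qm algebra_simps)
lemma qneg_l: "qmult (- p) r = - qmult p r"
  by (simp add: vec_eq_iff forall_4 qm algebra_simps)
lemma qneg_r: "qmult r (- p) = - qmult r p"
  by (simp add: vec_eq_iff forall_4 qm algebra_simps)
lemma qsc_l: "qmult (c *\<^sub>R p) r = c *\<^sub>R qmult p r"
  by (simp add: vec_eq_iff forall_4 qm algebra_simps)
lemma qsc_r: "qmult r (c *\<^sub>R p) = c *\<^sub>R qmult r p"
  by (simp add: vec_eq_iff forall_4 qm algebra_simps)
lemma qreal_l: "qmult (qreal c) r = c *\<^sub>R r"
  unfolding vec_eq_iff forall_4 qm qr by simp
lemma qreal_r: "qmult r (qreal c) = c *\<^sub>R r"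
  unfolding vec_eq_iff forall_4 qm qr by simp

lemma hp_anti: assumes "pure_unit f"
  shows "qmult f (hplus f h x) = - qmult (hplus f h x) f"
proof -
  have a: "qmult f (qmult (qmult f p) f) = - qmult p f" for p
    by (simp add: qassoc[symmetric] ff[OF assms] qreal_l qneg_l qneg_r)
  have b: "qmult (qmult (qmult f p) f) f = - qmult f p" for p
    by (simp add: qassoc ff[OF assms] qreal_r qneg_l qneg_r)
  show ?thesis unfolding hplus_def qsc_l qsc_r qadd_l qadd_r a b
    by (simp add: algebra_simps)
qed

lemma hm_comm: assumes "pure_unit f"
  shows "qmult f (hminus f h x) = qmult (hminus f h x) f"
proof -
  have a: "qmult f (qmult (qmult f p) f) = - qmult p f" for p
    by (simp add: qassoc[symmetric] ff[OF assms] qreal_l qneg_l qneg_r)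
  have b: "qmult (qmult (qmult f p) f) f = - qmult f p" for p
    by (simp add: qassoc ff[OF assms] qreal_r qneg_l qneg_r)
  show ?thesis unfolding hminus_def qsc_l qsc_r qdiff_l qdiff_r a b
    by (simp add: algebra_simps)
qed

lemma anti_exp: assumes "qmult f p = - qmult p f"
  shows "qmult (qexp f a) p = qmult p (qexp f (-a))"
  unfolding qexp_def qadd_l qadd_r qsc_l qsc_r qreal_l qreal_r assms by simp

lemma comm_exp: assumes "qmult f p = qmult p f"
  shows "qmult (qexp f a) p = qmult p (qexp f a)"
  unfolding qexp_def qadd_l qadd_r qsc_l qsc_r qreal_l qreal_r assms by simp

lemma qexp_add: assumes "pure_unit f"
  shows "qmult (qexp f a) (qexp f b) = qexp f (a + b)"
proof -
  have "qmult (qexp f a) (qexp f b) = qreal (cos a * cos b) + (cos a * sin b) *\<^sub>R f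
     + (sin a * cos b) *\<^sub>R f + (sin a * sin b) *\<^sub>R qreal (-1)"
    unfolding qexp_def qadd_l qadd_r qsc_l qsc_r qreal_l qreal_r ff[OF assms]
    by (simp add: algebra_simps vec_eq_iff forall_4 qr)
  also have "\<dots> = qexp f (a+b)"
    unfolding qexp_def by (simp add: vec_eq_iff forall_4 qr cos_add sin_add algebra_simps)
  finally show ?thesis .
qed

theorem mainTheorem9:
  fixes f :: quat and h :: "real \<times> real \<Rightarrow> quat"
  assumes "pure_unit f"
    and "integrable lborel h"
  shows "\<forall>\<omega> :: real \<times> real.
      FD f (hplus f h) \<omega>
        = (LINT x|lborel. qmult (hplus f h x) (qexp f (snd x * snd \<omega>)))
    \<and> (LINT x|lborel. qmult (hplus f h x) (qexp f (snd x * snd \<omega>)))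
        = (LINT x|lborel. qmult (qexp f (- (snd x * snd \<omega>))) (hplus f h x))
    \<and> FD f (hminus f h) \<omega>
        = (LINT x|lborel. qmult (hminus f h x) (qexp f (- (fst x * fst \<omega>))))
    \<and> (LINT x|lborel. qmult (hminus f h x) (qexp f (- (fst x * fst \<omega>))))
        = (LINT x|lborel. qmult (qexp f (- (fst x * fst \<omega>))) (hminus f h x))"
proof (intro allI conjI)
  fix w :: "real \<times> real"
  have p1: "qmult (qmult (qexp f a) (hplus f h x)) (qexp f b) = qmult (hplus f h x) (qexp f (b - a))" for a b x
    by (simp add: anti_exp[OF hp_anti[OF assms(1)]] qassoc qexp_add[OF assms(1)])
  show "FD f (hplus f h) w
        = (LINT x|lborel. qmult (hplus f h x) (qexp f (snd x * snd w)))"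
    unfolding FD_def p1 by (simp add: algebra_simps)
  show "(LINT x|lborel. qmult (hplus f h x) (qexp f (snd x * snd w)))
        = (LINT x|lborel. qmult (qexp f (- (snd x * snd w))) (hplus f h x))"
    by (simp add: anti_exp[OF hp_anti[OF assms(1)]])
  have p2: "qmult (qmult (qexp f a) (hminus f h x)) (qexp f b) = qmult (hminus f h x) (qexp f (a + b))" for a b x
    by (simp add: comm_exp[OF hm_comm[OF assms(1)]] qassoc qexp_add[OF assms(1)])
  show "FD f (hminus f h) w
        = (LINT x|lborel. qmult (hminus f h x) (qexp f (- (fst x * fst w))))"
    unfolding FD_def p2 by (simp add: algebra_simps)
  show "(LINT x|lborel. qmult (hminus f h x) (qexp f (- (fst x * fst w))))
        = (LINT x|lborel. qmult (qexp f (- (fst x * fst w))) (hminus f h x))"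
    by (simp add: comm_exp[OF hm_comm[OF assms(1)]])
qed

end
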